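(* Let $G$ be a graph, let $\epsilon,\epsilon'$ be positive constants with $\epsilon+\epsilon'<1/2$, let $K$ be a set of nodes that is $\epsilon$-almost-clique-like, and let $T$ be the $i$-th bucket of a $k$-bucketing of $K$ which is $\epsilon'$-almost-clique-preserved. Then $|T|\in(1\pm 2(\epsilon+\epsilon'))|K|/k$, and $T$ is $2(\epsilon+\epsilon')$-almost-clique-like.
   Context: $N(v)$ is the set of neighbors of $v$ in $G$. For $\epsilon\in(0,1/2)$, a set of nodes $K$ is $\epsilon$-almost-clique-like if $|N(v)\cap K|\ge(1-\epsilon)|K|$ for all $v\in K$. A $k$-bucketing of $K$ is an assignment of a value $t(v)\in[k]$ to each $v\in K$, defining buckets $T_j=\{v\in K: t(v)=j\}$ for $j\in[k]$. The bucketing $\epsilon'$-almost-clique-preserves its $i$-th bucket $T_i$ if for every $v\in K$, $|N(v)\cap T_i|\in(1\pm\epsilon')|N(v)\cap K|/k$. The notation $x\in(1\pm\delta)y$ means $(1-\delta)y\le x\le(1+\delta)y$. *)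

theory Defs
  imports Main "HOL-Library.Disjoint_Sets" Complex_Main
begin

definition graph :: "('a \<Rightarrow> 'a \<Rightarrow> bool) \<Rightarrow> bool" where
  "graph E \<longleftrightarrow> (\<forall>u v. E u v \<longrightarrow> E v u) \<and> (\<forall>v. \<not> E v v)"

definition neighbors :: "('a \<Rightarrow> 'a \<Rightarrow> bool) \<Rightarrow> 'a \<Rightarrow> 'a set" where
  "neighbors E v = {u. E v u}"

definition in_pm :: "real \<Rightarrow> real \<Rightarrow> real \<Rightarrow> bool" where
  "in_pm x d y \<longleftrightarrow> (1 - d) * y \<le> x \<and> x \<le> (1 + d) * y"

definition almost_clique_like :: "('a \<Rightarrow> 'a \<Rightarrow> bool) \<Rightarrow> real \<Rightarrow> 'a set \<Rightarrow> bool" where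
  "almost_clique_like E eps K \<longleftrightarrow>
     (\<forall>v\<in>K. real (card (neighbors E v \<inter> K)) \<ge> (1 - eps) * real (card K))"

definition bucketing :: "'a set \<Rightarrow> nat \<Rightarrow> ('a \<Rightarrow> nat) \<Rightarrow> bool" where
  "bucketing K k t \<longleftrightarrow> (\<forall>v\<in>K. t v \<in> {1..k})"

definition bucket :: "'a set \<Rightarrow> ('a \<Rightarrow> nat) \<Rightarrow> nat \<Rightarrow> 'a set" where
  "bucket K t j = {v\<in>K. t v = j}"

definition preserves_bucket ::
  "('a \<Rightarrow> 'a \<Rightarrow> bool) \<Rightarrow> 'a set \<Rightarrow> nat \<Rightarrow> ('a \<Rightarrow> nat) \<Rightarrow> real \<Rightarrow> nat \<Rightarrow> bool" where
  "preserves_bucket E K k t eps' i \<longleftrightarrow>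
     (\<forall>v\<in>K. in_pm (real (card (neighbors E v \<inter> bucket K t i))) eps'
                   (real (card (neighbors E v \<inter> K)) / real k))"

end

theory Submission
  imports Defs
begin

lemma alg1:
  fixes e e' x m :: real
  assumes "0 < e" "0 < e'" "e + e' < 1/2" "0 \<le> x" "m * (1 - e) \<le> (1 + e') * x"
  shows "m \<le> (1 + 2*(e+e')) * x"
proof -
  have eq: "(1 + 2*(e+e')) * (1 - e) - (1 + e') = e * (1 - 2*(e+e')) + e'"
    by (simp add: algebra_simps)
  have "0 \<le> e * (1 - 2*(e+e'))" using assms by simp
  then have "(1 + e') \<le> (1 + 2*(e+e')) * (1 - e)" using eq assms by linarith
  then have "(1 + e') * x \<le> (1 + 2*(e+e')) * (1 - e) * x"
    using assms(4) by (rule mult_right_mono)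
  then have "m * (1 - e) \<le> ((1 + 2*(e+e')) * x) * (1 - e)"
    using assms(5) by (simp add: algebra_simps)
  moreover have "0 < 1 - e" using assms by simp
  ultimately show ?thesis by simp
qed

lemma alg2:
  fixes e e' x m :: real
  assumes "0 < e" "0 < e'" "e + e' < 1/2" "0 \<le> x" "m * (1 - e) \<le> (1 + e') * x"
  shows "(1 - 2*(e+e')) * m \<le> (1 - e') * ((1 - e) * x)"
proof -
  have eq: "(1 - e') * (1 - e) * (1 - e) - (1 - 2*(e+e')) * (1 + e') = e*e*(1 - e') + 4*e*e' + 2*e'*e'"
    by (simp add: algebra_simps)
  have "0 \<le> e*e*(1 - e')" using assms by simp
  moreover have "0 \<le> e*e'" "0 \<le> e'*e'" using assms by simp_all
  ultimately have c: "(1 - 2*(e+e')) * (1 + e') \<le> (1 - e') * (1 - e) * (1 - e)" using eq by linarith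
  have p: "0 \<le> 1 - 2*(e+e')" using assms by simp
  have "(1 - 2*(e+e')) * (m * (1 - e)) \<le> (1 - 2*(e+e')) * ((1 + e') * x)"
    using assms(5) p by (rule mult_left_mono)
  also have "\<dots> = ((1 - 2*(e+e')) * (1 + e')) * x" by simp
  also have "\<dots> \<le> ((1 - e') * (1 - e) * (1 - e)) * x" using c assms(4) by (rule mult_right_mono)
  finally have "((1 - 2*(e+e')) * m) * (1 - e) \<le> ((1 - e') * ((1 - e) * x)) * (1 - e)"
    by (simp add: algebra_simps)
  moreover have "0 < 1 - e" using assms by simp
  ultimately show ?thesis by (simp add: mult.commute)
qed

lemma double_count:
  assumes "graph E" "finite K" "T \<subseteq> K"
  shows "(\<Sum>v\<in>K. card (neighbors E v \<inter> T)) = (\<Sum>u\<in>T. card (neighbors E u \<inter> K))"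
proof -
  have fT: "finite T" using assms finite_subset by blast
  have "\<And>v. card (neighbors E v \<inter> T) = (\<Sum>u\<in>T. if E v u then 1 else 0)"
  proof -
    fix v
    have "neighbors E v \<inter> T = {u\<in>T. E v u}" by (auto simp: neighbors_def)
    then show "card (neighbors E v \<inter> T) = (\<Sum>u\<in>T. if E v u then 1 else 0)"
      using fT by (simp add: sum.If_cases Int_def)
  qed
  moreover have "\<And>u. card (neighbors E u \<inter> K) = (\<Sum>v\<in>K. if E v u then 1 else 0)"
  proof -
    fix u
    have "neighbors E u \<inter> K = {v\<in>K. E v u}" using assms(1)
      by (auto simp: neighbors_def graph_def)
    then show "card (neighbors E u \<inter> K) = (\<Sum>v\<in>K. if E v u then 1 else 0)"
      using assms(2) by (simp add: sum.If_cases Int_def)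
  qed
  ultimately show ?thesis using sum.swap by (simp add: sum.swap[of _ K T])
qed

theorem lemma4p6:
  fixes E :: "'a \<Rightarrow> 'a \<Rightarrow> bool" and K :: "'a set" and k i :: nat
    and t :: "'a \<Rightarrow> nat" and eps eps' :: real
  assumes "graph E"
    and "finite K"
    and "0 < eps" and "eps < 1/2" and "0 < eps'" and "eps' < 1/2"
    and "eps + eps' < 1/2"
    and "almost_clique_like E eps K"
    and "k \<ge> 1" and "bucketing K k t" and "i \<in> {1..k}"
    and "preserves_bucket E K k t eps' i"
  shows "in_pm (real (card (bucket K t i))) (2 * (eps + eps')) (real (card K) / real k)
         \<and> almost_clique_like E (2 * (eps + eps')) (bucket K t i)"
proof -
  define T where "T = bucket K t i"
  define n where "n = real (card K)"
  define m where "m = real (card T)"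
  define x where "x = n / real k"
  define dK where "dK v = real (card (neighbors E v \<inter> K))" for v
  define dT where "dT v = real (card (neighbors E v \<inter> T))" for v
  have TK: "T \<subseteq> K" by (auto simp: T_def bucket_def)
  have fT: "finite T" using TK assms(2) finite_subset by blast
  have kpos: "real k > 0" using assms(9) by simp
  have x0: "0 \<le> x" by (simp add: x_def n_def)
  have dKlo: "(1 - eps) * n \<le> dK v" if "v \<in> K" for v
    using assms(8) that by (simp add: almost_clique_like_def dK_def n_def)
  have dKhi: "dK v \<le> n" for v
    unfolding dK_def n_def using assms(2) by (simp add: card_mono)
  have dTlo: "(1 - eps') * (dK v / real k) \<le> dT v" if "v \<in> K" for v
    using assms(12) that by (simp add: preserves_bucket_def in_pm_def dK_def dT_def T_def)
  have dThi: "dT v \<le> (1 + eps') * (dK v / real k)" if "v \<in> K" for v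
    using assms(12) that by (simp add: preserves_bucket_def in_pm_def dK_def dT_def T_def)
  have dTm: "dT v \<le> m" for v
    unfolding dT_def m_def using fT by (simp add: card_mono)
  have dTlo2: "(1 - eps') * ((1 - eps) * x) \<le> dT v" if "v \<in> K" for v
  proof -
    have "(1 - eps) * n / real k \<le> dK v / real k" using dKlo[OF that] kpos
      by (simp add: divide_right_mono)
    then have "(1 - eps') * ((1 - eps) * n / real k) \<le> (1 - eps') * (dK v / real k)"
      using assms(6) by (intro mult_left_mono) auto
    then have "(1 - eps') * ((1 - eps) * x) \<le> (1 - eps') * (dK v / real k)"
      by (simp add: x_def)
    then show ?thesis using dTlo[OF that] by linarith
  qed
  have sumeq: "(\<Sum>v\<in>K. dT v) = (\<Sum>u\<in>T. dK u)"
    using double_count[OF assms(1) assms(2) TK] unfolding dT_def dK_def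
    by (metis of_nat_sum)
  have upper: "m * (1 - eps) \<le> (1 + eps') * x"
  proof (cases "K = {}")
    case True
    then show ?thesis using TK by (simp add: m_def x_def n_def)
  next
    case False
    then have npos: "n > 0" using assms(2) by (simp add: n_def card_gt_0_iff)
    have "m * ((1 - eps) * n) = (\<Sum>u\<in>T. (1 - eps) * n)" by (simp add: m_def)
    also have "\<dots> \<le> (\<Sum>u\<in>T. dK u)" using dKlo TK by (intro sum_mono) auto
    also have "\<dots> = (\<Sum>v\<in>K. dT v)" using sumeq by simp
    also have "\<dots> \<le> (\<Sum>v\<in>K. (1 + eps') * x)"
    proof (rule sum_mono)
      fix v assume v: "v \<in> K"
      have "dK v / real k \<le> x" using dKhi kpos by (simp add: x_def divide_right_mono)
      then have "(1 + eps') * (dK v / real k) \<le> (1 + eps') * x"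
        using assms(5) by (intro mult_left_mono) auto
      then show "dT v \<le> (1 + eps') * x" using dThi[OF v] by linarith
    qed
    also have "\<dots> = ((1 + eps') * x) * n" by (simp add: n_def)
    finally have "(m * (1 - eps)) * n \<le> ((1 + eps') * x) * n" by (simp add: algebra_simps)
    then show ?thesis using npos by simp
  qed
  have part1: "in_pm m (2 * (eps + eps')) x"
  proof (cases "K = {}")
    case True
    then show ?thesis using TK by (simp add: m_def x_def n_def in_pm_def)
  next
    case False
    then obtain v0 where v0: "v0 \<in> K" by blast
    have "(1 - 2 * (eps + eps')) * x \<le> (1 - eps') * ((1 - eps) * x)"
    proof -
      have eq: "(1 - eps') * (1 - eps) - (1 - 2 * (eps + eps')) = eps + eps' + eps * eps'"
        by (simp add: algebra_simps)
      have "0 \<le> eps * eps'" using assms by simp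
      then have "(1 - 2 * (eps + eps')) \<le> (1 - eps') * (1 - eps)" using eq assms by linarith
      then have "(1 - 2 * (eps + eps')) * x \<le> ((1 - eps') * (1 - eps)) * x"
        using x0 by (rule mult_right_mono)
      then show ?thesis by (simp add: algebra_simps)
    qed
    then have "(1 - 2 * (eps + eps')) * x \<le> m" using dTlo2[OF v0] dTm[of v0] by linarith
    moreover have "m \<le> (1 + 2 * (eps + eps')) * x"
      using alg1[OF assms(3) assms(5) assms(7) x0 upper] by simp
    ultimately show ?thesis by (simp add: in_pm_def)
  qed
  have part2: "almost_clique_like E (2 * (eps + eps')) T"
    unfolding almost_clique_like_def
  proof
    fix v assume v: "v \<in> T"
    have "(1 - 2 * (eps + eps')) * m \<le> (1 - eps') * ((1 - eps) * x)"
      using alg2[OF assms(3) assms(5) assms(7) x0 upper] .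
    also have "\<dots> \<le> dT v" using dTlo2 v TK by blast
    finally show "(1 - 2 * (eps + eps')) * real (card T) \<le> real (card (neighbors E v \<inter> T))"
      by (simp add: m_def dT_def)
  qed
  show ?thesis using part1 part2 by (simp add: T_def m_def x_def n_def)
qed

end
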